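(* For all $n\ge 1$, \[\left|\mathrm{Av}_n[\overline{123},\overline{321}]\right|=\begin{cases}1 & n=1,\\ 0 & n\ge 3 \text{ odd},\\ U_{n-1} & n\ge 2\text{ even},\end{cases}\] where $U_m$ is the number of up-down permutations of length $m$.
   Context: For $\sigma\in S_n$, the cyclic permutation $[\sigma]$ is the set of all rotations of $\sigma$; $[S_n]$ is the set of cyclic permutations of length $n$. A vincular pattern is a permutation $\pi\in S_k$ with some pairs of adjacent positions joined by an overline; a linear permutation $\tau$ contains it if $\tau$ has a subsequence order-isomorphic to $\pi$ whose entries corresponding to overlined adjacent positions are adjacent in $\tau$. $[\sigma]$ contains $[\pi]$ if some rotation of $\sigma$ contains $\pi$. $\mathrm{Av}_n[\overline{123},\overline{321}]$ is the set of $[\sigma]\in[S_n]$ avoiding both $[\overline{123}]$ and $[\overline{321}]$ (i.e. with no three cyclically consecutive entries increasing or decreasing). An up-down permutation of length $m$ is $\sigma\in S_m$ with $\sigma_1<\sigma_2>\sigma_3<\sigma_4>\cdots$. *)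

theory Defs
  imports Main
begin

definition perms :: "nat \<Rightarrow> nat list set" where
  "perms n = {xs. distinct xs \<and> set xs = {1..n}}"

definition cyc :: "nat list \<Rightarrow> nat list set" where
  "cyc \<sigma> = {rotate k \<sigma> | k. k < length \<sigma>}"

definition cyc_perms :: "nat \<Rightarrow> nat list set set" where
  "cyc_perms n = cyc ` perms n"

text \<open>A vincular pattern is a pattern pi (list, order pattern) together with a set A of
  positions i (0-based) such that positions i and i+1 of pi are joined by an overline.
  tau contains (pi, A) if there are positions idx_0 < ... < idx_{k-1} in tau whose entries are
  order-isomorphic to pi and idx_{i+1} = idx_i + 1 for every i in A.\<close>
definition vinc_contains :: "nat list \<Rightarrow> nat list \<Rightarrow> nat set \<Rightarrow> bool" where
  "vinc_contains \<tau> \<pi> A \<longleftrightarrow>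
     (\<exists>idx. length idx = length \<pi> \<and> sorted_wrt (<) idx \<and> (\<forall>j\<in>set idx. j < length \<tau>) \<and>
        (\<forall>i j. i < length \<pi> \<longrightarrow> j < length \<pi> \<longrightarrow>
            (\<tau> ! (idx ! i) < \<tau> ! (idx ! j) \<longleftrightarrow> \<pi> ! i < \<pi> ! j)) \<and>
        (\<forall>i\<in>A. i + 1 < length \<pi> \<longrightarrow> idx ! (i + 1) = idx ! i + 1))"

definition cyc_contains :: "nat list set \<Rightarrow> nat list \<Rightarrow> nat set \<Rightarrow> bool" where
  "cyc_contains C \<pi> A \<longleftrightarrow> (\<exists>\<tau>\<in>C. vinc_contains \<tau> \<pi> A)"

definition Av_123_321 :: "nat \<Rightarrow> nat list set set" where
  "Av_123_321 n = {C \<in> cyc_perms n.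
      \<not> cyc_contains C [1,2,3] {0,1} \<and> \<not> cyc_contains C [3,2,1] {0,1}}"

text \<open>Up-down permutations: sigma_1 < sigma_2 > sigma_3 < ... (1-based), i.e. with 0-based
  indices, ascent at even i and descent at odd i.\<close>
definition up_down :: "nat list \<Rightarrow> bool" where
  "up_down \<sigma> \<longleftrightarrow> (\<forall>i. i + 1 < length \<sigma> \<longrightarrow>
      (if even i then \<sigma> ! i < \<sigma> ! (i + 1) else \<sigma> ! i > \<sigma> ! (i + 1)))"

definition U :: "nat \<Rightarrow> nat" where
  "U m = card {\<sigma> \<in> perms m. up_down \<sigma>}"

end

theory Submission
  imports Defs
begin


lemma len3: "length xs = 3 \<Longrightarrow> \<exists>a b c. xs = [a,b,c]"
  by (metis One_nat_def length_0_conv length_Suc_conv numeral_3_eq_3)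

lemma all3: "(\<forall>i<(3::nat). P i) \<longleftrightarrow> P 0 \<and> P 1 \<and> P 2"
  by (auto simp: numeral_3_eq_3 numeral_2_eq_2 less_Suc_eq)

lemma vinc123: "vinc_contains \<tau> [1,2,3] {0,1} \<longleftrightarrow>
   (\<exists>i. i + 2 < length \<tau> \<and> \<tau>!i < \<tau>!(i+1) \<and> \<tau>!(i+1) < \<tau>!(i+2))"
proof
  assume "vinc_contains \<tau> [1,2,3] {0,1}"
  then obtain idx where l0: "length idx = length [1::nat,2,3]" and s: "sorted_wrt (<) idx"
    and b: "\<forall>j\<in>set idx. j < length \<tau>"
    and o0: "\<forall>i j. i < length [1::nat,2,3] \<longrightarrow> j < length [1::nat,2,3] \<longrightarrow> (\<tau> ! (idx ! i) < \<tau> ! (idx ! j) \<longleftrightarrow> [1::nat,2,3] ! i < [1::nat,2,3] ! j)"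
    and a0: "\<forall>i\<in>{0::nat,1}. i + 1 < length [1::nat,2,3] \<longrightarrow> idx ! (i + 1) = idx ! i + 1"
    unfolding vinc_contains_def by blast
  have l: "length idx = 3" using l0 by simp
  have o: "\<forall>i j. i < 3 \<longrightarrow> j < 3 \<longrightarrow> (\<tau> ! (idx ! i) < \<tau> ! (idx ! j) \<longleftrightarrow> [1::nat,2,3] ! i < [1::nat,2,3] ! j)" using o0 by simp
  have a: "\<forall>i\<in>{0::nat,1}. i + 1 < 3 \<longrightarrow> idx ! (i + 1) = idx ! i + 1" using a0 by simp
  from len3[OF l] obtain x y z where idx: "idx = [x,y,z]" by blast
  have "y = x+1" "z = y+1" using a idx by auto
  moreover have "\<tau>!x < \<tau>!y" using o[rule_format, of 0 1] idx by simp
  moreover have "\<tau>!y < \<tau>!z" using o[rule_format, of 1 2] idx by simp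
  moreover have "z < length \<tau>" using b idx by simp
  ultimately show "\<exists>i. i + 2 < length \<tau> \<and> \<tau>!i < \<tau>!(i+1) \<and> \<tau>!(i+1) < \<tau>!(i+2)"
    by (intro exI[of _ x]) auto
next
  assume "\<exists>i. i + 2 < length \<tau> \<and> \<tau>!i < \<tau>!(i+1) \<and> \<tau>!(i+1) < \<tau>!(i+2)"
  then obtain i where h: "i + 2 < length \<tau>" "\<tau>!i < \<tau>!(i+1)" "\<tau>!(i+1) < \<tau>!(i+2)" by blast
  show "vinc_contains \<tau> [1,2,3] {0,1}"
    unfolding vinc_contains_def
    apply (rule exI[of _ "[i,i+1,i+2]"])
    using h by (auto simp: all3 numeral_3_eq_3 less_Suc_eq)
qed

lemma vinc321: "vinc_contains \<tau> [3,2,1] {0,1} \<longleftrightarrow>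
   (\<exists>i. i + 2 < length \<tau> \<and> \<tau>!i > \<tau>!(i+1) \<and> \<tau>!(i+1) > \<tau>!(i+2))"
proof
  assume "vinc_contains \<tau> [3,2,1] {0,1}"
  then obtain idx where l0: "length idx = length [3::nat,2,1]" and s: "sorted_wrt (<) idx"
    and b: "\<forall>j\<in>set idx. j < length \<tau>"
    and o0: "\<forall>i j. i < length [3::nat,2,1] \<longrightarrow> j < length [3::nat,2,1] \<longrightarrow> (\<tau> ! (idx ! i) < \<tau> ! (idx ! j) \<longleftrightarrow> [3::nat,2,1] ! i < [3::nat,2,1] ! j)"
    and a0: "\<forall>i\<in>{0::nat,1}. i + 1 < length [3::nat,2,1] \<longrightarrow> idx ! (i + 1) = idx ! i + 1"
    unfolding vinc_contains_def by blast
  have l: "length idx = 3" using l0 by simp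
  have o: "\<forall>i j. i < 3 \<longrightarrow> j < 3 \<longrightarrow> (\<tau> ! (idx ! i) < \<tau> ! (idx ! j) \<longleftrightarrow> [3::nat,2,1] ! i < [3::nat,2,1] ! j)" using o0 by simp
  have a: "\<forall>i\<in>{0::nat,1}. i + 1 < 3 \<longrightarrow> idx ! (i + 1) = idx ! i + 1" using a0 by simp
  from len3[OF l] obtain x y z where idx: "idx = [x,y,z]" by blast
  have "y = x+1" "z = y+1" using a idx by auto
  moreover have "\<tau>!y < \<tau>!x" using o[rule_format, of 1 0] idx by simp
  moreover have "\<tau>!z < \<tau>!y" using o[rule_format, of 2 1] idx by simp
  moreover have "z < length \<tau>" using b idx by simp
  ultimately show "\<exists>i. i + 2 < length \<tau> \<and> \<tau>!i > \<tau>!(i+1) \<and> \<tau>!(i+1) > \<tau>!(i+2)"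
    by (intro exI[of _ x]) auto
next
  assume "\<exists>i. i + 2 < length \<tau> \<and> \<tau>!i > \<tau>!(i+1) \<and> \<tau>!(i+1) > \<tau>!(i+2)"
  then obtain i where h: "i + 2 < length \<tau>" "\<tau>!i > \<tau>!(i+1)" "\<tau>!(i+1) > \<tau>!(i+2)" by blast
  show "vinc_contains \<tau> [3,2,1] {0,1}"
    unfolding vinc_contains_def
    apply (rule exI[of _ "[i,i+1,i+2]"])
    using h by (auto simp: all3 numeral_3_eq_3 less_Suc_eq)
qed

lemma cyc_contains_cyc: "cyc_contains (cyc \<sigma>) \<pi> A \<longleftrightarrow> (\<exists>k<length \<sigma>. vinc_contains (rotate k \<sigma>) \<pi> A)"
  unfolding cyc_contains_def cyc_def by auto

lemma mod_shift: "0 < n \<Longrightarrow> (i + 1 + k) mod (n::nat) = ((i + k) mod n + 1) mod n"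
  by (simp add: mod_Suc_eq)

lemma cyc_triple:
  assumes n3: "length \<sigma> \<ge> 3"
  shows "(\<exists>k<length \<sigma>. \<exists>i. i + 2 < length \<sigma> \<and> Q (rotate k \<sigma> ! i) (rotate k \<sigma> ! (i+1)) (rotate k \<sigma> ! (i+2)))
     \<longleftrightarrow> (\<exists>j<length \<sigma>. Q (\<sigma>!j) (\<sigma>!((j+1) mod length \<sigma>)) (\<sigma>!((j+2) mod length \<sigma>)))"
proof -
  define n where "n = length \<sigma>"
  have np: "0 < n" using n3 n_def by linarith
  have e: "rotate k \<sigma> ! m = \<sigma> ! ((k + m) mod n)" if "m < n" for m k
    using nth_rotate[of m \<sigma> k] that n_def by simp
  show ?thesis unfolding n_def[symmetric]
  proof
    assume "\<exists>k<n. \<exists>i. i + 2 < n \<and> Q (rotate k \<sigma> ! i) (rotate k \<sigma> ! (i+1)) (rotate k \<sigma> ! (i+2))"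
    then obtain k i where k: "k < n" "i + 2 < n" and
      h: "Q (rotate k \<sigma> ! i) (rotate k \<sigma> ! (i+1)) (rotate k \<sigma> ! (i+2))" by blast
    define j where "j = (k + i) mod n"
    have j1: "(k + (i+1)) mod n = (j + 1) mod n" unfolding j_def by (simp add: mod_Suc_eq)
    have j2: "(k + (i+2)) mod n = (j + 2) mod n" unfolding j_def by (metis add_2_eq_Suc' mod_add_left_eq add.assoc)
    have "j < n" unfolding j_def using np by simp
    moreover have "Q (\<sigma>!j) (\<sigma>!((j+1) mod n)) (\<sigma>!((j+2) mod n))"
      using h e[of i k] e[of "i+1" k] e[of "i+2" k] k j1 j2 unfolding j_def by simp
    ultimately show "\<exists>j<n. Q (\<sigma>!j) (\<sigma>!((j+1) mod n)) (\<sigma>!((j+2) mod n))" by blast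
  next
    assume "\<exists>j<n. Q (\<sigma>!j) (\<sigma>!((j+1) mod n)) (\<sigma>!((j+2) mod n))"
    then obtain j where j: "j < n" "Q (\<sigma>!j) (\<sigma>!((j+1) mod n)) (\<sigma>!((j+2) mod n))" by blast
    have "rotate j \<sigma> ! 0 = \<sigma> ! j" using e[of 0 j] np j by simp
    moreover have "rotate j \<sigma> ! 1 = \<sigma> ! ((j+1) mod n)" using e[of 1 j] n3 n_def by simp
    moreover have "rotate j \<sigma> ! 2 = \<sigma> ! ((j+2) mod n)" using e[of 2 j] n3 n_def by simp
    moreover have "0 + 2 < n" using n3 n_def by simp
    ultimately have "0 + 2 < n \<and> Q (rotate j \<sigma> ! 0) (rotate j \<sigma> ! (0+1)) (rotate j \<sigma> ! (0+2))"
      using j by (simp add: numeral_2_eq_2)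
    then show "\<exists>k<n. \<exists>i. i + 2 < n \<and> Q (rotate k \<sigma> ! i) (rotate k \<sigma> ! (i+1)) (rotate k \<sigma> ! (i+2))"
      using j(1) by blast
  qed
qed

lemma cc123: "length \<sigma> \<ge> 3 \<Longrightarrow> cyc_contains (cyc \<sigma>) [1,2,3] {0,1} \<longleftrightarrow>
  (\<exists>j<length \<sigma>. \<sigma>!j < \<sigma>!((j+1) mod length \<sigma>) \<and> \<sigma>!((j+1) mod length \<sigma>) < \<sigma>!((j+2) mod length \<sigma>))"
  unfolding cyc_contains_cyc vinc123 length_rotate
  by (rule cyc_triple[of \<sigma> "\<lambda>a b c. a < b \<and> b < c"])

lemma cc321: "length \<sigma> \<ge> 3 \<Longrightarrow> cyc_contains (cyc \<sigma>) [3,2,1] {0,1} \<longleftrightarrow>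
  (\<exists>j<length \<sigma>. \<sigma>!j > \<sigma>!((j+1) mod length \<sigma>) \<and> \<sigma>!((j+1) mod length \<sigma>) > \<sigma>!((j+2) mod length \<sigma>))"
  unfolding cyc_contains_cyc vinc321 length_rotate
  by (rule cyc_triple[of \<sigma> "\<lambda>a b c. a > b \<and> b > c"])



definition dd :: "nat list \<Rightarrow> nat \<Rightarrow> bool" where
  "dd \<sigma> j \<longleftrightarrow> \<sigma>!j < \<sigma>!((j+1) mod length \<sigma>)"

definition good :: "nat list \<Rightarrow> bool" where
  "good \<sigma> \<longleftrightarrow> (\<forall>j<length \<sigma>. dd \<sigma> j \<noteq> dd \<sigma> ((j+1) mod length \<sigma>))"

lemma mod2: "0 < n \<Longrightarrow> (j + 2) mod n = ((j + 1) mod n + 1) mod (n::nat)"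
  by (simp add: mod_Suc_eq)

lemma avoid_good:
  assumes d: "distinct \<sigma>" and n2: "length \<sigma> \<ge> 2"
  shows "(\<not> cyc_contains (cyc \<sigma>) [1,2,3] {0,1} \<and> \<not> cyc_contains (cyc \<sigma>) [3,2,1] {0,1}) \<longleftrightarrow> good \<sigma>"
proof (cases "length \<sigma> = 2")
  case True
  have "\<not> cyc_contains (cyc \<sigma>) [1,2,3] {0,1}" "\<not> cyc_contains (cyc \<sigma>) [3,2,1] {0,1}"
    unfolding cyc_contains_cyc vinc123 vinc321 using True by auto
  moreover have "good \<sigma>"
  proof -
    have ne: "\<sigma>!0 \<noteq> \<sigma>!1" using d True nth_eq_iff_index_eq[of \<sigma> 0 1] by simp
    have dd01: "dd \<sigma> 0 \<noteq> dd \<sigma> 1" using ne True unfolding dd_def by auto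
    show ?thesis unfolding good_def True
    proof (intro allI impI)
      fix j :: nat assume "j < 2"
      then have "j = 0 \<or> j = 1" by auto
      then show "dd \<sigma> j \<noteq> dd \<sigma> ((j + 1) mod 2)" using dd01 by auto
    qed
  qed
  ultimately show ?thesis by simp
next
  case False
  define n where "n = length \<sigma>"
  have n3: "n \<ge> 3" using False n2 n_def by simp
  have np: "0 < n" using n3 by simp
  have ne: "\<sigma>!j \<noteq> \<sigma>!((j+1) mod n)" if "j < n" for j
  proof -
    have "j \<noteq> (j+1) mod n" proof (cases "j + 1 < n")
      case True then show ?thesis by simp
    next
      case False then have "j + 1 = n" using that by simp
      then show ?thesis using n3 by simp
    qed
    then show ?thesis using d that np nth_eq_iff_index_eq[of \<sigma> j "(j+1) mod n"] n_def by simp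
  qed
  have A: "cyc_contains (cyc \<sigma>) [1,2,3] {0,1} \<longleftrightarrow> (\<exists>j<n. dd \<sigma> j \<and> dd \<sigma> ((j+1) mod n))"
    unfolding cc123[OF n3[unfolded n_def]] n_def[symmetric] dd_def mod2[OF np] by simp
  have B: "cyc_contains (cyc \<sigma>) [3,2,1] {0,1} \<longleftrightarrow> (\<exists>j<n. \<not> dd \<sigma> j \<and> \<not> dd \<sigma> ((j+1) mod n))"
  proof -
    have "(\<sigma>!j > \<sigma>!((j+1) mod n) \<and> \<sigma>!((j+1) mod n) > \<sigma>!(((j+1) mod n + 1) mod n)) \<longleftrightarrow>
       (\<not> dd \<sigma> j \<and> \<not> dd \<sigma> ((j+1) mod n))" if "j < n" for j
      using ne[OF that] ne[of "(j+1) mod n"] np unfolding dd_def n_def[symmetric] by auto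
    then show ?thesis
      unfolding cc321[OF n3[unfolded n_def]] n_def[symmetric] mod2[OF np] by auto
  qed
  show ?thesis unfolding A B good_def n_def[symmetric] by blast
qed

lemma alt:
  assumes g: "good \<sigma>" shows "j < length \<sigma> \<Longrightarrow> dd \<sigma> j = (dd \<sigma> 0 = even j)"
proof (induction j)
  case 0 then show ?case by simp
next
  case (Suc j)
  then have "dd \<sigma> j \<noteq> dd \<sigma> ((j+1) mod length \<sigma>)" using g unfolding good_def by simp
  moreover have "dd \<sigma> j = (dd \<sigma> 0 = even j)" using Suc by simp
  moreover have "(j+1) mod length \<sigma> = Suc j" using Suc.prems by simp
  ultimately show ?case by auto
qed

lemma odd_not_good:
  assumes g: "good \<sigma>" and o: "odd (length \<sigma>)" shows False
proof -
  define n where "n = length \<sigma>"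
  have np: "0 < n" using o n_def by (cases \<sigma>) auto
  have "dd \<sigma> (n-1) = dd \<sigma> 0" using alt[OF g, of "n-1"] np o n_def by simp
  moreover have "dd \<sigma> (n-1) \<noteq> dd \<sigma> ((n - 1 + 1) mod n)" using g np unfolding good_def n_def by simp
  ultimately show False using np by simp
qed



lemma perms_len: "\<sigma> \<in> perms n \<Longrightarrow> length \<sigma> = n"
  unfolding perms_def by (metis (mono_tags, lifting) mem_Collect_eq distinct_card card_atLeastAtMost diff_Suc_1)

lemma perms_distinct: "\<sigma> \<in> perms n \<Longrightarrow> distinct \<sigma>" unfolding perms_def by simp
lemma perms_set: "\<sigma> \<in> perms n \<Longrightarrow> set \<sigma> = {1..n}" unfolding perms_def by simp

lemma perms_rotate: "\<sigma> \<in> perms n \<Longrightarrow> rotate m \<sigma> \<in> perms n"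
  unfolding perms_def by simp

lemma rot_back:
  assumes np: "0 < (n::nat)" and k: "k < n"
  shows "((k + (n - m mod n)) mod n + m) mod n = k"
proof -
  have "((k + (n - m mod n)) mod n + m) mod n = (k + (n - m mod n) + m) mod n"
    by (simp add: mod_add_left_eq)
  also have "k + (n - m mod n) + m = k + n + (m div n) * n"
    using np mod_less_divisor[OF np, of m] div_mult_mod_eq[of m n] by linarith
  also have "(k + n + (m div n) * n) mod n = k" using k by simp
  finally show ?thesis .
qed

lemma cyc_rotate: "cyc (rotate m \<sigma>) = cyc \<sigma>"
proof (cases "\<sigma> = []")
  case True then show ?thesis by simp
next
  case False
  define n where "n = length \<sigma>"
  have np: "0 < n" using False n_def by simp
  show ?thesis
  proof
    show "cyc (rotate m \<sigma>) \<subseteq> cyc \<sigma>"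
    proof
      fix x assume "x \<in> cyc (rotate m \<sigma>)"
      then obtain k where x: "x = rotate k (rotate m \<sigma>)" unfolding cyc_def by auto
      have "x = rotate ((k + m) mod n) \<sigma>" unfolding x rotate_rotate n_def
        by (metis rotate_conv_mod)
      moreover have "(k + m) mod n < n" using np by simp
      ultimately show "x \<in> cyc \<sigma>" unfolding cyc_def n_def by auto
    qed
  next
    show "cyc \<sigma> \<subseteq> cyc (rotate m \<sigma>)"
    proof
      fix x assume "x \<in> cyc \<sigma>"
      then obtain k where x: "x = rotate k \<sigma>" and k: "k < n" unfolding cyc_def n_def by auto
      define a where "a = (k + (n - m mod n)) mod n"
      have "rotate a (rotate m \<sigma>) = rotate ((a + m) mod n) \<sigma>"
        unfolding rotate_rotate n_def by (metis rotate_conv_mod)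
      also have "(a + m) mod n = k" unfolding a_def using rot_back[OF np k] .
      finally have "x = rotate a (rotate m \<sigma>)" using x by simp
      moreover have "a < length (rotate m \<sigma>)" unfolding a_def n_def using np n_def by simp
      ultimately show "x \<in> cyc (rotate m \<sigma>)" unfolding cyc_def by auto
    qed
  qed
qed

lemma good_rotate:
  assumes "distinct \<sigma>" "length \<sigma> \<ge> 2"
  shows "good (rotate m \<sigma>) \<longleftrightarrow> good \<sigma>"
  using avoid_good[OF assms] avoid_good[of "rotate m \<sigma>"] assms cyc_rotate[of m \<sigma>] by simp

lemma Av_char:
  assumes "n \<ge> 2"
  shows "Av_123_321 n = cyc ` {\<sigma> \<in> perms n. good \<sigma>}"
proof -
  have "(\<not> cyc_contains (cyc \<sigma>) [1,2,3] {0,1} \<and> \<not> cyc_contains (cyc \<sigma>) [3,2,1] {0,1}) \<longleftrightarrow> good \<sigma>"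
    if "\<sigma> \<in> perms n" for \<sigma>
    using avoid_good[of \<sigma>] perms_distinct[OF that] perms_len[OF that] assms by simp
  then show ?thesis unfolding Av_123_321_def cyc_perms_def by blast
qed



lemma ud_good:
  assumes tp: "\<tau> \<in> perms (n-1)" and ud: "up_down \<tau>" and ev: "even n" and n2: "n \<ge> 2"
  shows "\<tau> @ [n] \<in> perms n \<and> good (\<tau> @ [n])"
proof -
  define xs where "xs = \<tau> @ [n]"
  have lt: "length \<tau> = n - 1" using perms_len[OF tp] .
  have lx: "length xs = n" using lt n2 xs_def by simp
  have st: "set \<tau> = {1..n-1}" using perms_set[OF tp] .
  have nt: "n \<notin> set \<tau>" using st n2 by auto
  have px: "xs \<in> perms n" unfolding perms_def xs_def using perms_distinct[OF tp] nt st n2 by auto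
  have sx: "set xs = {1..n}" using px perms_set by blast
  have x1: "xs ! i = \<tau> ! i" if "i < n - 1" for i using that lt unfolding xs_def by (simp add: nth_append)
  have xl: "xs ! (n-1) = n" using lt unfolding xs_def by (simp add: nth_append)
  have ddx: "dd xs j = even j" if j: "j < n" for j
  proof -
    consider "j + 2 < n" | "j = n - 2" | "j = n - 1" using j n2 by linarith
    then show ?thesis
    proof cases
      case 1
      then have m: "(j+1) mod length xs = j + 1" using lx by simp
      have "j + 1 < length \<tau>" using 1 lt by simp
      then have "if even j then \<tau> ! j < \<tau> ! (j + 1) else \<tau> ! j > \<tau> ! (j + 1)"
        using ud unfolding up_down_def by blast
      then show ?thesis unfolding dd_def m using x1[of j] x1[of "j+1"] 1 by (auto split: if_splits)
    next
      case 2
      then have m: "(j+1) mod length xs = n - 1" using lx n2 by simp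
      have "\<tau> ! j \<in> set \<tau>" using 2 lt n2 by simp
      then have "\<tau> ! j < n" using st by auto
      then show ?thesis unfolding dd_def m using x1[of j] xl 2 n2 ev by auto
    next
      case 3
      then have m: "(j+1) mod length xs = 0" using lx n2 by simp
      have "xs ! 0 \<in> set xs" using lx n2 by simp
      then have "xs ! 0 \<le> n" using sx by auto
      then show ?thesis unfolding dd_def m using xl 3 n2 ev by auto
    qed
  qed
  have "good xs" unfolding good_def lx
  proof (intro allI impI)
    fix j assume j: "j < n"
    show "dd xs j \<noteq> dd xs ((j + 1) mod n)"
    proof (cases "j + 1 < n")
      case True then show ?thesis using ddx[OF j] ddx[OF True] by simp
    next
      case False then have "j = n - 1" using j by simp
      then show ?thesis using ddx[OF j] ddx[of 0] n2 ev by simp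
    qed
  qed
  then show ?thesis using px xs_def by simp
qed

lemma good_ud:
  assumes sp: "\<sigma> \<in> perms n" and g: "good \<sigma>" and ev: "even n" and n2: "n \<ge> 2" and last: "\<sigma> ! (n-1) = n"
  shows "butlast \<sigma> \<in> perms (n-1) \<and> up_down (butlast \<sigma>) \<and> \<sigma> = butlast \<sigma> @ [n]"
proof -
  have ls: "length \<sigma> = n" using perms_len[OF sp] .
  have ds: "distinct \<sigma>" using perms_distinct[OF sp] .
  have ss: "set \<sigma> = {1..n}" using perms_set[OF sp] .
  have s0: "\<sigma> ! 0 \<le> n" using ss ls n2 nth_mem[of 0 \<sigma>] by auto
  have "\<not> dd \<sigma> (n-1)" unfolding dd_def ls using last n2 s0 by simp
  then have d0: "dd \<sigma> 0" using alt[OF g, of "n-1"] ls n2 ev by simp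
  have ddj: "dd \<sigma> j = even j" if "j < n" for j using alt[OF g, of j] that ls d0 by simp
  have sne: "\<sigma> \<noteq> []" using ls n2 by auto
  have ln: "last \<sigma> = n" using last_conv_nth[OF sne] last ls by simp
  have eq: "\<sigma> = butlast \<sigma> @ [n]"
    by (metis append_butlast_last_id[OF sne] ln)
  define \<tau> where "\<tau> = butlast \<sigma>"
  have eq': "\<sigma> = \<tau> @ [n]" using eq unfolding \<tau>_def .
  have lt: "length \<tau> = n - 1" unfolding \<tau>_def using ls by simp
  have dt: "distinct (\<tau> @ [n])" using ds arg_cong[OF eq', of distinct] by simp
  have st: "set \<tau> = {1..n-1}"
  proof -
    have A: "set \<tau> \<union> {n} = {1..n}" using ss arg_cong[OF eq', of set] by simp
    have B: "n \<notin> set \<tau>" using dt by simp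
    have "set \<tau> = (set \<tau> \<union> {n}) - {n}" using B by auto
    also have "\<dots> = {1..n} - {n}" by (simp only: A)
    also have "\<dots> = {1..n-1}" by auto
    finally show ?thesis .
  qed
  have tp: "\<tau> \<in> perms (n-1)" unfolding perms_def using dt st by simp
  have tn: "\<tau> ! i = \<sigma> ! i" if "i < n - 1" for i unfolding \<tau>_def using that ls by (simp add: nth_butlast)
  have "up_down \<tau>" unfolding up_down_def
  proof (intro allI impI)
    fix i assume i: "i + 1 < length \<tau>"
    then have m: "(i + 1) mod length \<sigma> = i + 1" using lt ls by simp
    have ne: "\<sigma> ! i \<noteq> \<sigma> ! (i+1)" using ds i lt ls nth_eq_iff_index_eq[of \<sigma> i "i+1"] by simp
    have "dd \<sigma> i = even i" using ddj i lt by simp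
    then have "(\<sigma> ! i < \<sigma> ! (i+1)) = even i" unfolding dd_def m .
    then show "if even i then \<tau> ! i < \<tau> ! (i + 1) else \<tau> ! (i + 1) < \<tau> ! i"
      using tn[of i] tn[of "i+1"] i lt ne by auto
  qed
  then show ?thesis using tp eq \<tau>_def by simp
qed

lemma rot_to_end:
  assumes sp: "\<sigma> \<in> perms n" and n1: "n \<ge> 1"
  shows "\<exists>m. rotate m \<sigma> ! (n-1) = n"
proof -
  have ls: "length \<sigma> = n" using perms_len[OF sp] .
  have "n \<in> set \<sigma>" using perms_set[OF sp] n1 by simp
  then obtain p where p: "p < n" "\<sigma> ! p = n" using ls by (metis in_set_conv_nth)
  have "rotate (Suc p) \<sigma> ! (n-1) = \<sigma> ! ((Suc p + (n-1)) mod n)" using nth_rotate[of "n-1" \<sigma> "Suc p"] ls n1 by simp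
  also have "(Suc p + (n-1)) mod n = p" using p n1 by (simp add: mod_if)
  finally show ?thesis using p by blast
qed

lemma inj_f:
  assumes n2: "n \<ge> 2"
  shows "inj_on (\<lambda>\<tau>. cyc (\<tau> @ [n])) {\<tau> \<in> perms (n-1). up_down \<tau>}"
proof (rule inj_onI)
  fix \<tau> \<tau>' assume t: "\<tau> \<in> {\<tau> \<in> perms (n-1). up_down \<tau>}" and t': "\<tau>' \<in> {\<tau> \<in> perms (n-1). up_down \<tau>}"
    and e: "cyc (\<tau> @ [n]) = cyc (\<tau>' @ [n])"
  have lt: "length \<tau> = n - 1" using t perms_len by blast
  have lt': "length \<tau>' = n - 1" using t' perms_len by blast
  have "\<tau> @ [n] \<in> cyc (\<tau> @ [n])" unfolding cyc_def by (rule CollectI, rule exI[of _ 0]) simp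
  then have "\<tau> @ [n] \<in> cyc (\<tau>' @ [n])" using e by simp
  then obtain k where k0: "k < length (\<tau>' @ [n])" and r: "\<tau> @ [n] = rotate k (\<tau>' @ [n])"
    unfolding cyc_def by blast
  have k: "k < n" using k0 lt' n2 by simp
  define xs where "xs = \<tau>' @ [n]"
  have lx: "length xs = n" using lt' n2 xs_def by simp
  have "set \<tau>' = {1..n-1}" "distinct \<tau>'" using t' perms_set perms_distinct by auto
  then have dx: "distinct xs" unfolding xs_def using n2 by auto
  have "(\<tau> @ [n]) ! (n-1) = n" using lt by (simp add: nth_append)
  then have "xs ! ((k + (n-1)) mod n) = xs ! (n-1)"
    using r nth_rotate[of "n-1" xs k] lx n2 xs_def lt' by (simp add: nth_append)
  then have "(k + (n-1)) mod n = n - 1" using nth_eq_iff_index_eq[OF dx] lx n2 by simp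
  then have "k = 0" using k n2 by (cases k) (auto simp: mod_if split: if_splits)
  then show "\<tau> = \<tau>'" using r by simp
qed



lemma even_case:
  assumes ev: "even n" and n2: "n \<ge> 2"
  shows "card (Av_123_321 n) = U (n - 1)"
proof -
  let ?G = "{\<sigma> \<in> perms n. good \<sigma>}"
  let ?UD = "{\<tau> \<in> perms (n-1). up_down \<tau>}"
  let ?f = "\<lambda>\<tau>. cyc (\<tau> @ [n])"
  have "cyc ` ?G = ?f ` ?UD"
  proof
    show "cyc ` ?G \<subseteq> ?f ` ?UD"
    proof
      fix C assume "C \<in> cyc ` ?G"
      then obtain \<sigma> where C: "C = cyc \<sigma>" and sp: "\<sigma> \<in> perms n" and g: "good \<sigma>" by blast
      obtain m where m: "rotate m \<sigma> ! (n-1) = n" using rot_to_end[OF sp] n2 by auto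
      define \<rho> where "\<rho> = rotate m \<sigma>"
      have rp: "\<rho> \<in> perms n" using perms_rotate[OF sp] \<rho>_def by simp
      have gr: "good \<rho>" using good_rotate[of \<sigma> m] g perms_distinct[OF sp] perms_len[OF sp] n2 \<rho>_def by simp
      have "butlast \<rho> \<in> perms (n-1) \<and> up_down (butlast \<rho>) \<and> \<rho> = butlast \<rho> @ [n]"
        using good_ud[OF rp gr ev n2] m \<rho>_def by simp
      moreover have "C = cyc \<rho>" unfolding C \<rho>_def cyc_rotate ..
      ultimately have "C = ?f (butlast \<rho>)" "butlast \<rho> \<in> ?UD" by auto
      then show "C \<in> ?f ` ?UD" by blast
    qed
  next
    show "?f ` ?UD \<subseteq> cyc ` ?G"
    proof
      fix C assume "C \<in> ?f ` ?UD"
      then obtain \<tau> where C: "C = ?f \<tau>" and t: "\<tau> \<in> perms (n-1)" "up_down \<tau>" by blast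
      have "\<tau> @ [n] \<in> ?G" using ud_good[OF t ev n2] by simp
      then show "C \<in> cyc ` ?G" using C by blast
    qed
  qed
  then have "card (Av_123_321 n) = card (?f ` ?UD)" using Av_char[OF n2] by simp
  also have "\<dots> = card ?UD" by (rule card_image[OF inj_f[OF n2]])
  finally show ?thesis unfolding U_def .
qed

lemma odd_case:
  assumes o: "odd n" and n2: "n \<ge> 2"
  shows "Av_123_321 n = {}"
proof -
  have "{\<sigma> \<in> perms n. good \<sigma>} = {}"
    using odd_not_good perms_len o by blast
  then show ?thesis using Av_char[OF n2] by simp
qed

lemma perms1: "perms 1 = {[1]}"
proof
  show "perms 1 \<subseteq> {[1]}"
  proof
    fix xs assume "xs \<in> perms 1"
    then have l: "length xs = 1" and s: "set xs = {1}" using perms_len perms_set by auto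
    then obtain a where "xs = [a]" by (metis One_nat_def length_0_conv length_Suc_conv)
    then show "xs \<in> {[1]}" using s by simp
  qed
next
  show "{[1]} \<subseteq> perms 1" unfolding perms_def by simp
qed

lemma one_case: "card (Av_123_321 1) = 1"
proof -
  have "\<not> cyc_contains (cyc [1]) [1,2,3] {0,1}" "\<not> cyc_contains (cyc [1]) [3,2,1] {0,1}"
    unfolding cyc_contains_cyc vinc123 vinc321 by auto
  then have "Av_123_321 1 = {cyc [1]}" unfolding Av_123_321_def cyc_perms_def perms1 by auto
  then show ?thesis by simp
qed

theorem proposition4p2:
  fixes n :: nat
  assumes "n \<ge> 1"
  shows "card (Av_123_321 n) =
           (if n = 1 then 1 else if odd n then 0 else U (n - 1))"
proof (cases "n = 1")
  case True then show ?thesis using one_case by simp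
next
  case False
  then have n2: "n \<ge> 2" using assms by simp
  show ?thesis
  proof (cases "odd n")
    case True then show ?thesis using odd_case[OF True n2] False by simp
  next
    case ev: False then show ?thesis using even_case[of n] n2 False by simp
  qed
qed

end
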